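(* Let $G$, $\mathrm{b}$, $(w_{ij})$ with all $w_{ij}\le 0$, $H^*$, $U(H^* )$ and $(y^*,\lambda^* )$ be as in the context, and assume the LP relaxation (Primal LP') has no fractional solution. Then for any alternating path $P$ (with respect to $H^*$) whose endpoints belong to $U(H^* )$, there exists an edge $\{i,j\}\in P$ with $|w_{ij}+y_i^*+y_j^*|>0$.
   Context: Let $G=(V,E)$ be a finite undirected simple graph, $V=\{1,\dots,n\}$, with real edge weights $w_{ij}\le0$ and positive integers $b_i\le\deg_G(i)$; $N(i)$ is the neighbour set of $i$. A $\mathrm{b}$-matching is a set of edges in which each vertex $i$ has degree at most $b_i$; $H^*$ is a minimum weight $\mathrm{b}$-matching, and $U(H^* )$ is the set of vertices $i$ with $\deg_{H^*}(i)<b_i$. Primal LP': minimize $\sum w_{ij}x_{ij}$ s.t. $\sum_{j\in N(i)}x_{ij}\le b_i$, $0\le x_{ij}\le1$. Dual LP': maximize $-\sum_ib_iy_i-\sum\lambda_{ij}$ s.t. $w_{ij}+\lambda_{ij}\ge-y_i-y_j$, $\lambda_{ij}\ge0$ (and $y_i\ge0$). "No fractional solution" means every optimal solution of Primal LP' lies in $\{0,1\}^E$. $(y^*,\lambda^* )$ is an optimal solution of Dual LP'. A walk $P=(i_1,\dots,i_k)$ in $G$ is an alternating path (w.r.t. $H^*$) if (a) either all odd edges $\{i_1,i_2\},\{i_3,i_4\},\dots$ are in $H^*$ and all even edges $\{i_2,i_3\},\{i_4,i_5\},\dots$ are not, or vice versa; and (b) $i_r\neq i_{r+1}$ and $i_r\neq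 i_{r+2}$ for $1\le r\le k-2$ (vertices and edges may be revisited but no edge is repeated immediately). *)

theory Defs
  imports Complex_Main
begin

definition vset :: "nat \<Rightarrow> nat set" where
  "vset n = {1..n}"

definition simple_graph :: "nat \<Rightarrow> nat set set \<Rightarrow> bool" where
  "simple_graph n E \<longleftrightarrow> E \<subseteq> {{i, j} | i j. i \<in> vset n \<and> j \<in> vset n \<and> i \<noteq> j}"

definition nbrs :: "nat set set \<Rightarrow> nat \<Rightarrow> nat set" where
  "nbrs E i = {j. {i, j} \<in> E}"

definition deg :: "nat set set \<Rightarrow> nat \<Rightarrow> nat" where
  "deg F i = card {e \<in> F. i \<in> e}"

definition is_bmatching :: "nat \<Rightarrow> nat set set \<Rightarrow> (nat \<Rightarrow> nat) \<Rightarrow> nat set set \<Rightarrow> bool" where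
  "is_bmatching n E b H \<longleftrightarrow> H \<subseteq> E \<and> (\<forall>i \<in> vset n. deg H i \<le> b i)"

definition is_min_bmatching ::
  "nat \<Rightarrow> nat set set \<Rightarrow> (nat \<Rightarrow> nat) \<Rightarrow> (nat set \<Rightarrow> real) \<Rightarrow> nat set set \<Rightarrow> bool" where
  "is_min_bmatching n E b w H \<longleftrightarrow> is_bmatching n E b H \<and>
     (\<forall>M. is_bmatching n E b M \<longrightarrow> (\<Sum>e\<in>H. w e) \<le> (\<Sum>e\<in>M. w e))"

definition unsat :: "nat \<Rightarrow> (nat \<Rightarrow> nat) \<Rightarrow> nat set set \<Rightarrow> nat set" where
  "unsat n b H = {i \<in> vset n. deg H i < b i}"

definition primal_feasible :: "nat \<Rightarrow> nat set set \<Rightarrow> (nat \<Rightarrow> nat) \<Rightarrow> (nat set \<Rightarrow> real) \<Rightarrow> bool" where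
  "primal_feasible n E b x \<longleftrightarrow>
     (\<forall>i \<in> vset n. (\<Sum>j \<in> nbrs E i. x {i, j}) \<le> real (b i)) \<and>
     (\<forall>e \<in> E. 0 \<le> x e \<and> x e \<le> 1)"

definition primal_obj :: "nat set set \<Rightarrow> (nat set \<Rightarrow> real) \<Rightarrow> (nat set \<Rightarrow> real) \<Rightarrow> real" where
  "primal_obj E w x = (\<Sum>e \<in> E. w e * x e)"

definition primal_optimal ::
  "nat \<Rightarrow> nat set set \<Rightarrow> (nat \<Rightarrow> nat) \<Rightarrow> (nat set \<Rightarrow> real) \<Rightarrow> (nat set \<Rightarrow> real) \<Rightarrow> bool" where
  "primal_optimal n E b w x \<longleftrightarrow> primal_feasible n E b x \<and>
     (\<forall>x'. primal_feasible n E b x' \<longrightarrow> primal_obj E w x \<le> primal_obj E w x')"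

definition no_fractional_solution ::
  "nat \<Rightarrow> nat set set \<Rightarrow> (nat \<Rightarrow> nat) \<Rightarrow> (nat set \<Rightarrow> real) \<Rightarrow> bool" where
  "no_fractional_solution n E b w \<longleftrightarrow>
     (\<forall>x. primal_optimal n E b w x \<longrightarrow> (\<forall>e \<in> E. x e = 0 \<or> x e = 1))"

definition dual_feasible ::
  "nat \<Rightarrow> nat set set \<Rightarrow> (nat set \<Rightarrow> real) \<Rightarrow> (nat \<Rightarrow> real) \<Rightarrow> (nat set \<Rightarrow> real) \<Rightarrow> bool" where
  "dual_feasible n E w y lam \<longleftrightarrow>
     (\<forall>i \<in> vset n. 0 \<le> y i) \<and> (\<forall>e \<in> E. 0 \<le> lam e) \<and>
     (\<forall>i j. {i, j} \<in> E \<longrightarrow> w {i, j} + lam {i, j} \<ge> - y i - y j)"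

definition dual_obj ::
  "nat \<Rightarrow> nat set set \<Rightarrow> (nat \<Rightarrow> nat) \<Rightarrow> (nat \<Rightarrow> real) \<Rightarrow> (nat set \<Rightarrow> real) \<Rightarrow> real" where
  "dual_obj n E b y lam = - (\<Sum>i \<in> vset n. real (b i) * y i) - (\<Sum>e \<in> E. lam e)"

definition dual_optimal ::
  "nat \<Rightarrow> nat set set \<Rightarrow> (nat \<Rightarrow> nat) \<Rightarrow> (nat set \<Rightarrow> real) \<Rightarrow> (nat \<Rightarrow> real) \<Rightarrow> (nat set \<Rightarrow> real) \<Rightarrow> bool" where
  "dual_optimal n E b w y lam \<longleftrightarrow> dual_feasible n E w y lam \<and>
     (\<forall>y' lam'. dual_feasible n E w y' lam' \<longrightarrow> dual_obj n E b y' lam' \<le> dual_obj n E b y lam)"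

text \<open>Alternating path (walk) P = [i_1, ..., i_k] in G w.r.t. H; the r-th edge (0-based)
  is {P!r, P!(r+1)}.\<close>

definition alternating_path :: "nat set set \<Rightarrow> nat set set \<Rightarrow> nat list \<Rightarrow> bool" where
  "alternating_path E H P \<longleftrightarrow>
     (\<forall>r. Suc r < length P \<longrightarrow> {P ! r, P ! Suc r} \<in> E) \<and>
     ((\<forall>r. Suc r < length P \<longrightarrow> ({P ! r, P ! Suc r} \<in> H \<longleftrightarrow> even r)) \<or>
      (\<forall>r. Suc r < length P \<longrightarrow> ({P ! r, P ! Suc r} \<in> H \<longleftrightarrow> odd r))) \<and>
     (\<forall>r. Suc r < length P \<longrightarrow> P ! r \<noteq> P ! Suc r) \<and>
     (\<forall>r. Suc (Suc r) < length P \<longrightarrow> P ! r \<noteq> P ! Suc (Suc r))"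

end

theory Submission
  imports Defs
begin

definition dotp :: "'i set \<Rightarrow> ('i \<Rightarrow> real) \<Rightarrow> ('i \<Rightarrow> real) \<Rightarrow> real" where
  "dotp I y v = (\<Sum>i\<in>I. y i * v i)"

lemma dotp_lin2: "dotp I y (\<lambda>i. p * u i - q * v i) = p * dotp I y u - q * dotp I y v"
  by (simp add: dotp_def sum_subtractf sum_distrib_left algebra_simps)

lemma dotp_lin1: "dotp I (\<lambda>i. p * y i - q * z i) v = p * dotp I y v - q * dotp I z v"
  by (simp add: dotp_def sum_subtractf sum_distrib_left algebra_simps)

lemma farkas_cone:
  fixes a :: "'k \<Rightarrow> 'i \<Rightarrow> real" and b :: "'i \<Rightarrow> real"
  assumes "finite I" "finite K"
  shows "(\<exists>l. (\<forall>k\<in>K. 0 \<le> l k) \<and> (\<forall>i\<in>I. b i = (\<Sum>k\<in>K. l k * a k i)))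
       \<or> (\<exists>y. (\<forall>k\<in>K. 0 \<le> dotp I y (a k)) \<and> dotp I y b < 0)"
  using assms(2)
proof (induction K arbitrary: a b rule: finite_induct)
  case empty
  show ?case
  proof (cases "\<forall>i\<in>I. b i = 0")
    case True then show ?thesis by auto
  next
    case False
    then obtain i0 where i0: "i0 \<in> I" "b i0 \<noteq> 0" by auto
    have "0 < (\<Sum>i\<in>I. b i * b i)"
      by (rule sum_pos2[OF assms(1) i0(1)]) (use i0 in \<open>auto simp: zero_less_mult_iff\<close>)
    then have "dotp I (\<lambda>i. - b i) b < 0" by (simp add: dotp_def sum_negf)
    then show ?thesis by auto
  qed
next
  case (insert m K)
  from insert.IH[of b a] show ?case
  proof
    assume "\<exists>l. (\<forall>k\<in>K. 0 \<le> l k) \<and> (\<forall>i\<in>I. b i = (\<Sum>k\<in>K. l k * a k i))"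
    then obtain l where l: "\<forall>k\<in>K. 0 \<le> l k" "\<forall>i\<in>I. b i = (\<Sum>k\<in>K. l k * a k i)" by blast
    let ?l = "l(m := 0)"
    have "\<forall>k\<in>insert m K. 0 \<le> ?l k" using l by auto
    moreover have "\<forall>i\<in>I. b i = (\<Sum>k\<in>insert m K. ?l k * a k i)"
    proof
      fix i assume "i \<in> I"
      have "(\<Sum>k\<in>K. ?l k * a k i) = (\<Sum>k\<in>K. l k * a k i)"
        by (rule sum.cong) (use insert.hyps in auto)
      then show "b i = (\<Sum>k\<in>insert m K. ?l k * a k i)"
        using insert.hyps l(2) \<open>i \<in> I\<close> by simp
    qed
    ultimately show ?thesis by blast
  next
    assume "\<exists>y. (\<forall>k\<in>K. 0 \<le> dotp I y (a k)) \<and> dotp I y b < 0"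
    then obtain y where y: "\<forall>k\<in>K. 0 \<le> dotp I y (a k)" "dotp I y b < 0" by blast
    show ?thesis
    proof (cases "0 \<le> dotp I y (a m)")
      case True then show ?thesis using y by auto
    next
      case False
      define al where "al = dotp I y (a m)"
      have al: "al < 0" using False al_def by simp
      define a' where "a' = (\<lambda>k i. dotp I y (a k) * a m i - al * a k i)"
      define b' where "b' = (\<lambda>i. dotp I y b * a m i - al * b i)"
      from insert.IH[of b' a'] show ?thesis
      proof
        assume "\<exists>l. (\<forall>k\<in>K. 0 \<le> l k) \<and> (\<forall>i\<in>I. b' i = (\<Sum>k\<in>K. l k * a' k i))"
        then obtain l where l: "\<forall>k\<in>K. 0 \<le> l k" "\<forall>i\<in>I. b' i = (\<Sum>k\<in>K. l k * a' k i)" by blast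
        define S where "S = (\<Sum>k\<in>K. l k * dotp I y (a k))"
        have S: "0 \<le> S" unfolding S_def using l(1) y(1) by (intro sum_nonneg) auto
        define lm where "lm = (dotp I y b - S) / al"
        have lm: "0 \<le> lm" unfolding lm_def using S y(2) al
          by (intro divide_nonpos_neg) auto
        let ?L = "l(m := lm)"
        have "\<forall>k\<in>insert m K. 0 \<le> ?L k" using l lm by auto
        moreover have "\<forall>i\<in>I. b i = (\<Sum>k\<in>insert m K. ?L k * a k i)"
        proof
          fix i assume i: "i \<in> I"
          have s1: "(\<Sum>k\<in>K. ?L k * a k i) = (\<Sum>k\<in>K. l k * a k i)"
            by (rule sum.cong) (use insert.hyps in auto)
          have "b' i = (\<Sum>k\<in>K. l k * a' k i)" using l(2) i by auto
          also have "\<dots> = S * a m i - al * (\<Sum>k\<in>K. l k * a k i)"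
            unfolding a'_def S_def
            by (simp add: sum_subtractf sum_distrib_left sum_distrib_right algebra_simps)
          finally have "dotp I y b * a m i - al * b i = S * a m i - al * (\<Sum>k\<in>K. l k * a k i)"
            unfolding b'_def .
          then have "b i = lm * a m i + (\<Sum>k\<in>K. l k * a k i)"
            unfolding lm_def using al by (simp add: field_simps)
          then show "b i = (\<Sum>k\<in>insert m K. ?L k * a k i)"
            using insert.hyps s1 by simp
        qed
        ultimately show ?thesis by blast
      next
        assume "\<exists>z. (\<forall>k\<in>K. 0 \<le> dotp I z (a' k)) \<and> dotp I z b' < 0"
        then obtain z where z: "\<forall>k\<in>K. 0 \<le> dotp I z (a' k)" "dotp I z b' < 0" by blast
        define y' where "y' = (\<lambda>i. dotp I z (a m) * y i - al * z i)"
        have dy: "dotp I y' v = dotp I z (a m) * dotp I y v - al * dotp I z v" for v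
          unfolding y'_def by (rule dotp_lin1)
        have "\<forall>k\<in>insert m K. 0 \<le> dotp I y' (a k)"
        proof
          fix k assume "k \<in> insert m K"
          then show "0 \<le> dotp I y' (a k)"
          proof
            assume "k = m" then show ?thesis by (simp add: dy al_def)
          next
            assume "k \<in> K"
            then have "0 \<le> dotp I z (a' k)" using z by auto
            also have "dotp I z (a' k) = dotp I y' (a k)"
              unfolding a'_def dy dotp_lin2 by simp
            finally show ?thesis .
          qed
        qed
        moreover have "dotp I y' b < 0"
          using z(2) unfolding b'_def dy dotp_lin2 by (simp add: mult.commute)
        ultimately show ?thesis by blast
      qed
    qed
  qed
qed

lemma farkas_ineq:
  fixes A :: "'k \<Rightarrow> 'i \<Rightarrow> real" and c :: "'k \<Rightarrow> real"
  assumes "finite I" "finite K"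
    and nx: "\<not> (\<exists>x. \<forall>k\<in>K. (\<Sum>i\<in>I. A k i * x i) \<le> c k)"
  shows "\<exists>\<mu>. (\<forall>k\<in>K. 0 \<le> \<mu> k) \<and> (\<forall>i\<in>I. (\<Sum>k\<in>K. \<mu> k * A k i) = 0) \<and> (\<Sum>k\<in>K. \<mu> k * c k) < 0"
proof -
  define I' where "I' = insert None (Some ` I)"
  define a where "a = (\<lambda>k o'. case o' of None \<Rightarrow> c k | Some i \<Rightarrow> A k i)"
  define b :: "'i option \<Rightarrow> real" where "b = (\<lambda>o'. case o' of None \<Rightarrow> -1 | Some i \<Rightarrow> 0)"
  have fI': "finite I'" using assms(1) by (simp add: I'_def)
  have dsum: "dotp I' y v = y None * v None + (\<Sum>i\<in>I. y (Some i) * v (Some i))" for y v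
    unfolding dotp_def I'_def using assms(1)
    by (simp add: sum.reindex)
  from farkas_cone[OF fI' assms(2), of b a] show ?thesis
  proof
    assume "\<exists>l. (\<forall>k\<in>K. 0 \<le> l k) \<and> (\<forall>i\<in>I'. b i = (\<Sum>k\<in>K. l k * a k i))"
    then obtain l where l: "\<forall>k\<in>K. 0 \<le> l k" "\<forall>i\<in>I'. b i = (\<Sum>k\<in>K. l k * a k i)" by blast
    have "\<forall>i\<in>I. (\<Sum>k\<in>K. l k * A k i) = 0"
    proof
      fix i assume "i \<in> I"
      then have "Some i \<in> I'" by (simp add: I'_def)
      then show "(\<Sum>k\<in>K. l k * A k i) = 0" using l(2) by (auto simp: a_def b_def)
    qed
    moreover have "(\<Sum>k\<in>K. l k * c k) < 0"
      using l(2) by (auto simp: a_def b_def I'_def)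
    ultimately show ?thesis using l(1) by blast
  next
    assume "\<exists>y. (\<forall>k\<in>K. 0 \<le> dotp I' y (a k)) \<and> dotp I' y b < 0"
    then obtain y where y: "\<forall>k\<in>K. 0 \<le> dotp I' y (a k)" "dotp I' y b < 0" by blast
    have t: "0 < y None" using y(2) by (simp add: dsum b_def)
    define x where "x = (\<lambda>i. - y (Some i) / y None)"
    have "\<forall>k\<in>K. (\<Sum>i\<in>I. A k i * x i) \<le> c k"
    proof
      fix k assume "k \<in> K"
      then have h: "0 \<le> y None * c k + (\<Sum>i\<in>I. y (Some i) * A k i)"
        using y(1) by (simp add: dsum a_def)
      have "(\<Sum>i\<in>I. A k i * x i) = - (\<Sum>i\<in>I. y (Some i) * A k i) / y None"
        unfolding x_def by (simp add: sum_divide_distrib[symmetric] sum_negf algebra_simps)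
      also have "\<dots> \<le> c k" using h t by (simp add: field_simps)
      finally show "(\<Sum>i\<in>I. A k i * x i) \<le> c k" .
    qed
    with nx show ?thesis by blast
  qed
qed

definition load :: "nat set set \<Rightarrow> (nat set \<Rightarrow> real) \<Rightarrow> nat \<Rightarrow> real" where
  "load E x v = (\<Sum>e\<in>{e\<in>E. v\<in>e}. x e)"

context
  fixes n :: nat and E :: "nat set set"
  assumes sg: "simple_graph n E"
begin

lemma edge_form: "e \<in> E \<Longrightarrow> \<exists>i j. e = {i,j} \<and> i \<in> vset n \<and> j \<in> vset n \<and> i \<noteq> j"
  using sg unfolding simple_graph_def by blast

lemma edge_sub: "e \<in> E \<Longrightarrow> e \<subseteq> vset n"
  using edge_form by blast

lemma finV: "finite (vset n)" by (simp add: vset_def)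

lemma finE: "finite E"
proof -
  have "E \<subseteq> Pow (vset n)" using edge_sub by blast
  then show ?thesis using finV finite_subset by blast
qed

lemma nbrs_sum: "(\<Sum>j\<in>nbrs E v. f {v,j}) = (\<Sum>e\<in>{e\<in>E. v\<in>e}. f e)"
proof -
  have "bij_betw (\<lambda>j. {v,j}) (nbrs E v) {e\<in>E. v\<in>e}"
  proof (rule bij_betwI')
    show "\<And>x y. x \<in> nbrs E v \<Longrightarrow> y \<in> nbrs E v \<Longrightarrow> ({v, x} = {v, y}) = (x = y)"
      by (auto simp: doubleton_eq_iff)
    show "\<And>x. x \<in> nbrs E v \<Longrightarrow> {v, x} \<in> {e \<in> E. v \<in> e}" by (auto simp: nbrs_def)
    show "\<And>y. y \<in> {e \<in> E. v \<in> e} \<Longrightarrow> \<exists>x\<in>nbrs E v. y = {v, x}"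
    proof -
      fix e assume e: "e \<in> {e \<in> E. v \<in> e}"
      then obtain i j where "e = {i,j}" using edge_form by blast
      with e show "\<exists>x\<in>nbrs E v. e = {v, x}"
        by (auto simp: nbrs_def insert_commute)
    qed
  qed
  then show ?thesis by (rule sum.reindex_bij_betw)
qed

lemma feas_iff: "primal_feasible n E b x \<longleftrightarrow>
   (\<forall>i\<in>vset n. load E x i \<le> real (b i)) \<and> (\<forall>e\<in>E. 0 \<le> x e \<and> x e \<le> 1)"
  unfolding primal_feasible_def load_def nbrs_sum[of x] ..

lemma load_ind: "H \<subseteq> E \<Longrightarrow> load E (\<lambda>e. if e\<in>H then 1 else 0) v = real (deg H v)"
proof -
  assume H: "H \<subseteq> E"
  have "load E (\<lambda>e. if e\<in>H then 1 else 0) v = (\<Sum>e\<in>{e\<in>{e\<in>E. v\<in>e}. e \<in> H}. 1)"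
    unfolding load_def by (rule sum.inter_filter[symmetric]) (use finE in auto)
  also have "{e\<in>{e\<in>E. v\<in>e}. e \<in> H} = {e\<in>H. v\<in>e}" using H by auto
  finally show ?thesis by (simp add: deg_def)
qed

lemma obj_ind: "H \<subseteq> E \<Longrightarrow> primal_obj E w (\<lambda>e. if e\<in>H then 1 else 0) = (\<Sum>e\<in>H. w e)"
proof -
  assume H: "H \<subseteq> E"
  have "primal_obj E w (\<lambda>e. if e\<in>H then 1 else 0) = (\<Sum>e\<in>{e\<in>E. e\<in>H}. w e)"
    unfolding primal_obj_def using finE by (simp add: sum.inter_filter[symmetric] if_distrib cong: if_cong)
  also have "{e\<in>E. e\<in>H} = H" using H by auto
  finally show ?thesis .
qed

lemma double_count: "(\<Sum>v\<in>vset n. y v * load E x v) = (\<Sum>e\<in>E. x e * (\<Sum>v\<in>e. y v))"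
proof -
  have "(\<Sum>v\<in>vset n. y v * load E x v) = (\<Sum>v\<in>vset n. \<Sum>e\<in>E. if v \<in> e then y v * x e else 0)"
    unfolding load_def using finE by (auto simp: sum_distrib_left sum.inter_filter intro!: sum.cong)
  also have "\<dots> = (\<Sum>e\<in>E. \<Sum>v\<in>vset n. if v \<in> e then y v * x e else 0)"
    by (rule sum.swap)
  also have "\<dots> = (\<Sum>e\<in>E. x e * (\<Sum>v\<in>e. y v))"
  proof (rule sum.cong)
    fix e assume e: "e \<in> E"
    have "(\<Sum>v\<in>vset n. if v \<in> e then y v * x e else 0) = (\<Sum>v\<in>{v\<in>vset n. v\<in>e}. y v * x e)"
      using finV by (simp add: sum.inter_filter)
    also have "{v\<in>vset n. v\<in>e} = e" using edge_sub[OF e] by auto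
    finally show "(\<Sum>v\<in>vset n. if v \<in> e then y v * x e else 0) = x e * (\<Sum>v\<in>e. y v)"
      by (simp add: sum_distrib_left mult.commute)
  qed simp
  finally show ?thesis .
qed

lemma gap: "primal_obj E w x - dual_obj n E b y lam =
   (\<Sum>e\<in>E. x e * (w e + lam e + (\<Sum>v\<in>e. y v))) + (\<Sum>v\<in>vset n. y v * (real (b v) - load E x v))
   + (\<Sum>e\<in>E. lam e * (1 - x e))"
proof -
  have "(\<Sum>e\<in>E. x e * (w e + lam e + (\<Sum>v\<in>e. y v))) =
     (\<Sum>e\<in>E. w e * x e) + (\<Sum>e\<in>E. lam e * x e) + (\<Sum>e\<in>E. x e * (\<Sum>v\<in>e. y v))"
    by (simp add: sum.distrib algebra_simps)
  moreover have "(\<Sum>v\<in>vset n. y v * (real (b v) - load E x v)) =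
     (\<Sum>v\<in>vset n. real (b v) * y v) - (\<Sum>v\<in>vset n. y v * load E x v)"
    by (simp add: sum_subtractf algebra_simps)
  moreover have "(\<Sum>e\<in>E. lam e * (1 - x e)) = (\<Sum>e\<in>E. lam e) - (\<Sum>e\<in>E. lam e * x e)"
    by (simp add: sum_subtractf algebra_simps)
  ultimately show ?thesis
    unfolding primal_obj_def dual_obj_def double_count by simp
qed

lemma slack_nonneg: "dual_feasible n E w y lam \<Longrightarrow> e \<in> E \<Longrightarrow> 0 \<le> w e + lam e + (\<Sum>v\<in>e. y v)"
proof -
  assume df: "dual_feasible n E w y lam" and e: "e \<in> E"
  then obtain i j where ij: "e = {i,j}" "i \<noteq> j" using edge_form by blast
  then have "w {i,j} + lam {i,j} \<ge> - y i - y j" using df e unfolding dual_feasible_def by blast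
  then show ?thesis using ij by simp
qed

lemma gap_terms:
  assumes pf: "primal_feasible n E b x" and df: "dual_feasible n E w y lam"
  shows "0 \<le> (\<Sum>e\<in>E. x e * (w e + lam e + (\<Sum>v\<in>e. y v)))"
    and "0 \<le> (\<Sum>v\<in>vset n. y v * (real (b v) - load E x v))"
    and "0 \<le> (\<Sum>e\<in>E. lam e * (1 - x e))"
  using pf df slack_nonneg[OF df] unfolding feas_iff dual_feasible_def
  by (auto intro!: sum_nonneg)

lemma weak_duality:
  assumes pf: "primal_feasible n E b x" and df: "dual_feasible n E w y lam"
  shows "dual_obj n E b y lam \<le> primal_obj E w x"
  using gap[of w x b y lam] gap_terms[OF pf df] by linarith

end

lemma (in -) sum_ind_e: "(\<Sum>v\<in>vset n. g v * (if v \<in> e then 1 else 0)) = (\<Sum>v\<in>e. g v)"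
  if "e \<subseteq> vset n" for g :: "nat \<Rightarrow> real"
proof -
  have "(\<Sum>v\<in>vset n. g v * (if v \<in> e then 1 else 0)) = (\<Sum>v\<in>vset n. if v \<in> e then g v else 0)"
    by (intro sum.cong) auto
  also have "\<dots> = (\<Sum>v\<in>{v\<in>vset n. v \<in> e}. g v)"
    by (rule sum.inter_filter[symmetric]) (simp add: vset_def)
  also have "{v\<in>vset n. v \<in> e} = e" using that by auto
  finally show ?thesis .
qed

context
  fixes n :: nat and E :: "nat set set"
  assumes sg: "simple_graph n E"
begin

lemma primal_attain:
  assumes dopt: "dual_optimal n E b w y lam"
  shows "\<exists>x. primal_feasible n E b x \<and> primal_obj E w x \<le> dual_obj n E b y lam"
proof (rule ccontr)
  assume nx: "\<not> ?thesis"
  define D where "D = dual_obj n E b y lam"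
  define K :: "(nat + (nat set + (nat set + unit))) set" where "K = vset n <+> (E <+> (E <+> UNIV))"
  define A :: "(nat + (nat set + (nat set + unit))) \<Rightarrow> nat set \<Rightarrow> real" where
   "A = (\<lambda>k e. case k of Inl v \<Rightarrow> (if v \<in> e then 1 else 0) | Inr (Inl f) \<Rightarrow> (if e = f then 1 else 0)
        | Inr (Inr (Inl f)) \<Rightarrow> (if e = f then -1 else 0) | Inr (Inr (Inr u)) \<Rightarrow> w e)"
  define c :: "(nat + (nat set + (nat set + unit))) \<Rightarrow> real" where
   "c = (\<lambda>k. case k of Inl v \<Rightarrow> real (b v) | Inr (Inl f) \<Rightarrow> 1 | Inr (Inr (Inl f)) \<Rightarrow> 0 | Inr (Inr (Inr u)) \<Rightarrow> D)"
  have fE: "finite E" using finE[OF sg] .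
  have fV: "finite (vset n)" by (simp add: vset_def)
  have fK: "finite K" using fV fE by (simp add: K_def Plus_def)
  have sumK: "sum g K = (\<Sum>v\<in>vset n. g (Inl v)) + ((\<Sum>f\<in>E. g (Inr (Inl f))) + ((\<Sum>f\<in>E. g (Inr (Inr (Inl f)))) + g (Inr (Inr (Inr ())))))" for g :: "_ \<Rightarrow> real"
    unfolding K_def using fV fE by (simp add: sum.Plus comp_def UNIV_unit)
  have "\<not> (\<exists>x. \<forall>k\<in>K. (\<Sum>e\<in>E. A k e * x e) \<le> c k)"
  proof
    assume "\<exists>x. \<forall>k\<in>K. (\<Sum>e\<in>E. A k e * x e) \<le> c k"
    then obtain x where x: "\<forall>k\<in>K. (\<Sum>e\<in>E. A k e * x e) \<le> c k" by blast
    have "load E x v \<le> real (b v)" if "v \<in> vset n" for v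
    proof -
      have "Inl v \<in> K" using that by (simp add: K_def Plus_def)
      with x have "(\<Sum>e\<in>E. (if v\<in>e then 1 else 0) * x e) \<le> real (b v)" by (force simp: A_def c_def)
      moreover have "(\<Sum>e\<in>E. (if v\<in>e then 1 else 0) * x e) = load E x v"
        unfolding load_def by (subst sum.inter_filter[OF fE]) (auto intro!: sum.cong)
      ultimately show ?thesis by simp
    qed
    moreover have "0 \<le> x f \<and> x f \<le> 1" if "f \<in> E" for f
    proof -
      have "Inr (Inl f) \<in> K" "Inr (Inr (Inl f)) \<in> K" using that by (auto simp: K_def Plus_def)
      with x have "(\<Sum>e\<in>E. (if e = f then 1 else 0) * x e) \<le> 1"
        "(\<Sum>e\<in>E. (if e = f then -1 else 0) * x e) \<le> 0" by (force simp: A_def c_def)+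
      moreover have s: "(\<Sum>e\<in>E. (if e = f then a else 0) * x e) = a * x f" for a :: real
      proof -
        have "(\<Sum>e\<in>E. (if e = f then a else 0) * x e) = (\<Sum>e\<in>E. if e = f then a * x e else 0)"
          by (intro sum.cong) auto
        then show ?thesis using that fE by simp
      qed
      ultimately show ?thesis using s[of 1] s[of "-1"] by simp
    qed
    moreover have "primal_obj E w x \<le> D"
    proof -
      have "Inr (Inr (Inr ())) \<in> K" by (auto simp: K_def Plus_def)
      with x show ?thesis by (force simp: A_def c_def primal_obj_def)
    qed
    ultimately show False using nx feas_iff[OF sg] D_def by blast
  qed
  from farkas_ineq[OF fE fK this] obtain \<mu> where
    mu: "\<forall>k\<in>K. 0 \<le> \<mu> k" "\<forall>i\<in>E. (\<Sum>k\<in>K. \<mu> k * A k i) = 0" "(\<Sum>k\<in>K. \<mu> k * c k) < 0" by blast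
  define \<tau> where "\<tau> = \<mu> (Inr (Inr (Inr ())))"
  have mu0: "0 \<le> \<mu> (Inl v)" if "v \<in> vset n" for v using mu(1) that by (auto simp: K_def Plus_def)
  have mu1: "0 \<le> \<mu> (Inr (Inl f))" "0 \<le> \<mu> (Inr (Inr (Inl f)))" if "f \<in> E" for f
    using mu(1) that by (auto simp: K_def Plus_def)
  have tau: "0 \<le> \<tau>" using mu(1) by (auto simp: K_def Plus_def \<tau>_def)
  have eq: "(\<Sum>v\<in>e. \<mu> (Inl v)) + \<mu> (Inr (Inl e)) - \<mu> (Inr (Inr (Inl e))) + \<tau> * w e = 0"
    if e: "e \<in> E" for e
  proof -
    have "(\<Sum>k\<in>K. \<mu> k * A k e) = 0" using mu(2) e by blast
    moreover have "(\<Sum>v\<in>vset n. \<mu> (Inl v) * (if v \<in> e then 1 else 0)) = (\<Sum>v\<in>e. \<mu> (Inl v))"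
      by (rule sum_ind_e) (rule edge_sub[OF sg e])
    ultimately show ?thesis unfolding sumK using e fE
      by (simp add: A_def \<tau>_def if_distrib cong: if_cong)
  qed
  have cs: "(\<Sum>v\<in>vset n. \<mu> (Inl v) * real (b v)) + (\<Sum>f\<in>E. \<mu> (Inr (Inl f))) + \<tau> * D < 0"
    using mu(3) unfolding sumK by (simp add: c_def \<tau>_def)
  show False
  proof (cases "\<tau> = 0")
    case True
    have "0 \<le> (\<Sum>v\<in>vset n. \<mu> (Inl v) * real (b v))" using mu0 by (auto intro!: sum_nonneg)
    moreover have "0 \<le> (\<Sum>f\<in>E. \<mu> (Inr (Inl f)))" using mu1 by (auto intro!: sum_nonneg)
    ultimately show False using cs True by simp
  next
    case False
    then have tp: "0 < \<tau>" using tau by simp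
    define y' where "y' = (\<lambda>v. \<mu> (Inl v) / \<tau>)"
    define lam' where "lam' = (\<lambda>e. \<mu> (Inr (Inl e)) / \<tau>)"
    have "dual_feasible n E w y' lam'"
      unfolding dual_feasible_def
    proof (intro conjI allI impI ballI)
      fix v assume "v \<in> vset n" then show "0 \<le> y' v" using mu0 tp by (simp add: y'_def)
    next
      fix e assume "e \<in> E" then show "0 \<le> lam' e" using mu1 tp by (simp add: lam'_def)
    next
      fix i j assume ij: "{i, j} \<in> E"
      then obtain a b' where ab: "{i,j} = {a,b'}" "a \<noteq> b'" using edge_form[OF sg] by blast
      then have "i \<noteq> j" by (auto simp: doubleton_eq_iff)
      then have "\<mu> (Inl i) + \<mu> (Inl j) + \<mu> (Inr (Inl {i,j})) + \<tau> * w {i,j} \<ge> 0"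
        using eq[OF ij] mu1[OF ij] by simp
      then have "(\<mu> (Inl i) + \<mu> (Inl j) + \<mu> (Inr (Inl {i,j}))) / \<tau> + w {i,j} \<ge> 0"
        using tp by (simp add: field_simps)
      then show "- y' i - y' j \<le> w {i, j} + lam' {i, j}"
        by (simp add: y'_def lam'_def add_divide_distrib)
    qed
    moreover have "dual_obj n E b y' lam' > D"
    proof -
      have "dual_obj n E b y' lam' = - ((\<Sum>v\<in>vset n. \<mu> (Inl v) * real (b v)) + (\<Sum>f\<in>E. \<mu> (Inr (Inl f)))) / \<tau>"
        unfolding dual_obj_def y'_def lam'_def
        using tp by (simp add: sum_divide_distrib[symmetric] field_simps)
      also have "\<dots> > D" using cs tp by (simp add: field_simps)
      finally show ?thesis .
    qed
    ultimately show False using dopt unfolding dual_optimal_def D_def by force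
  qed
qed

end

lemma telesc:
  fixes g s :: "nat \<Rightarrow> real"
  assumes "\<forall>r. s (Suc r) = - s r"
  shows "(\<Sum>r<Suc m. (g r + g (Suc r)) * s r) = g 0 * s 0 + g (Suc m) * s m"
proof (induction m)
  case 0 then show ?case by (simp add: algebra_simps)
next
  case (Suc m)
  have "(\<Sum>r<Suc (Suc m). (g r + g (Suc r)) * s r) = g 0 * s 0 + g (Suc m) * s m + (g (Suc m) + g (Suc (Suc m))) * s (Suc m)"
    using Suc by simp
  also have "\<dots> = g 0 * s 0 + g (Suc (Suc m)) * s (Suc m)" using assms by (simp add: algebra_simps)
  finally show ?case .
qed

lemma sum_delta_real: "finite A \<Longrightarrow> (\<Sum>e\<in>A. (if a = e then c else 0) * (f e :: real)) = (if a \<in> A then c * f a else 0)"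
proof -
  assume "finite A"
  have "(\<Sum>e\<in>A. (if a = e then c else 0) * f e) = (\<Sum>e\<in>A. if a = e then c * f e else 0)"
    by (intro sum.cong) auto
  then show ?thesis using \<open>finite A\<close> by simp
qed

theorem lemma6:
  fixes n :: nat and E :: "nat set set" and w :: "nat set \<Rightarrow> real" and b :: "nat \<Rightarrow> nat"
    and H :: "nat set set" and y :: "nat \<Rightarrow> real" and lam :: "nat set \<Rightarrow> real"
    and P :: "nat list"
  assumes "simple_graph n E"
    and "\<forall>e \<in> E. w e \<le> 0"
    and "\<forall>i \<in> vset n. 0 < b i \<and> b i \<le> deg E i"
    and "is_min_bmatching n E b w H"
    and "dual_optimal n E b w y lam"
    and "no_fractional_solution n E b w"
    and "alternating_path E H P"
    and "2 \<le> length P"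
    and "hd P \<in> unsat n b H" and "last P \<in> unsat n b H"
  shows "\<exists>r. Suc r < length P \<and> \<bar>w {P ! r, P ! Suc r} + y (P ! r) + y (P ! Suc r)\<bar> > 0"
proof (rule ccontr)
  assume nc: "\<not> ?thesis"
  note sg = assms(1)
  have fE: "finite E" using finE[OF sg] .
  have HE: "H \<subseteq> E" using assms(4) unfolding is_min_bmatching_def is_bmatching_def by blast
  define D where "D = dual_obj n E b y lam"
  have df: "dual_feasible n E w y lam" using assms(5) unfolding dual_optimal_def by blast
  define indH where "indH = (\<lambda>e. if e \<in> H then 1 else (0::real))"
  have loadH: "load E indH v = real (deg H v)" for v unfolding indH_def by (rule load_ind[OF sg HE])
  have objH: "primal_obj E w indH = (\<Sum>e\<in>H. w e)" unfolding indH_def by (rule obj_ind[OF sg HE])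
  have Hfeas: "primal_feasible n E b indH"
    unfolding feas_iff[OF sg] loadH using assms(4)
    by (auto simp: is_min_bmatching_def is_bmatching_def indH_def)
  have weak: "D \<le> primal_obj E w x'" if "primal_feasible n E b x'" for x'
    unfolding D_def by (rule weak_duality[OF sg that df])
  have objHD: "primal_obj E w indH = D"
  proof -
    obtain x0 where x0: "primal_feasible n E b x0" "primal_obj E w x0 \<le> D"
      using primal_attain[OF sg assms(5)] D_def by blast
    have "primal_optimal n E b w x0"
      unfolding primal_optimal_def using x0 weak by force
    then have int: "\<forall>e\<in>E. x0 e = 0 \<or> x0 e = 1" using assms(6) unfolding no_fractional_solution_def by blast
    define M where "M = {e\<in>E. x0 e = 1}"
    have ME: "M \<subseteq> E" by (auto simp: M_def)
    have x0M: "x0 e = (if e \<in> M then 1 else 0)" if "e \<in> E" for e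
      using int that by (auto simp: M_def)
    have "load E x0 v = load E (\<lambda>e. if e \<in> M then 1 else 0) v" for v
      unfolding load_def by (rule sum.cong) (auto simp: x0M)
    then have "load E x0 v = real (deg M v)" for v using load_ind[OF sg ME] by simp
    then have "is_bmatching n E b M"
      using x0(1) ME unfolding feas_iff[OF sg] is_bmatching_def by auto
    then have "(\<Sum>e\<in>H. w e) \<le> (\<Sum>e\<in>M. w e)" using assms(4) unfolding is_min_bmatching_def by blast
    also have "(\<Sum>e\<in>M. w e) = primal_obj E w (\<lambda>e. if e \<in> M then 1 else 0)" using obj_ind[OF sg ME] by simp
    also have "\<dots> = primal_obj E w x0" unfolding primal_obj_def by (rule sum.cong) (auto simp: x0M)
    finally have "primal_obj E w indH \<le> D" using objH x0(2) by simp
    then show ?thesis using weak[OF Hfeas] by simp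
  qed
  have y0: "y v = 0" if v: "v \<in> unsat n b H" for v
  proof -
    note gt = gap_terms[OF sg Hfeas df]
    have "(\<Sum>v\<in>vset n. y v * (real (b v) - load E indH v)) = 0"
      using gap[OF sg, of w indH b y lam] gt objHD D_def by linarith
    moreover have "\<forall>v\<in>vset n. 0 \<le> y v * (real (b v) - load E indH v)"
      using Hfeas df unfolding feas_iff[OF sg] dual_feasible_def by auto
    ultimately have z: "\<forall>v\<in>vset n. y v * (real (b v) - load E indH v) = 0"
      using sum_nonneg_eq_0_iff[OF finV[OF sg], of "\<lambda>v. y v * (real (b v) - load E indH v)"] by simp
    have vv: "v \<in> vset n" "deg H v < b v" using v by (auto simp: unsat_def)
    have pos: "real (b v) - load E indH v > 0" using vv(2) loadH[of v] by simp
    have "y v * (real (b v) - load E indH v) = 0" using z vv(1) by blast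
    then show ?thesis using pos by simp
  qed
  obtain m where len: "length P = Suc (Suc m)"
  proof -
    have "length P = Suc (Suc (length P - 2))" using assms(8) by simp
    then show ?thesis using that by blast
  qed
  define ed where "ed = (\<lambda>r. {P ! r, P ! Suc r})"
  have ap1: "\<forall>r. Suc r < length P \<longrightarrow> {P ! r, P ! Suc r} \<in> E"
    and ap3: "\<forall>r. Suc r < length P \<longrightarrow> P ! r \<noteq> P ! Suc r"
    using assms(7) unfolding alternating_path_def by blast+
  have edE: "ed r \<in> E" if "r < Suc m" for r
    using ap1 that len unfolding ed_def by simp
  have neq: "P ! r \<noteq> P ! Suc r" if "r < Suc m" for r
    using ap3 that len by simp
  have tight: "w (ed r) + y (P ! r) + y (P ! Suc r) = 0" if "r < Suc m" for r
  proof -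
    have "Suc r < length P" using that len by simp
    then have "\<not> (\<bar>w {P ! r, P ! Suc r} + y (P ! r) + y (P ! Suc r)\<bar> > 0)" using nc by blast
    then show ?thesis unfolding ed_def by linarith
  qed
  obtain \<sigma> :: real where sig: "\<forall>r<Suc m. (if even r then \<sigma> else - \<sigma>) = (if ed r \<in> H then -1 else 1)"
  proof -
    from assms(7) have "(\<forall>r. Suc r < length P \<longrightarrow> (ed r \<in> H \<longleftrightarrow> even r)) \<or>
      (\<forall>r. Suc r < length P \<longrightarrow> (ed r \<in> H \<longleftrightarrow> odd r))"
      unfolding alternating_path_def ed_def by blast
    then show ?thesis
    proof
      assume h: "\<forall>r. Suc r < length P \<longrightarrow> (ed r \<in> H \<longleftrightarrow> even r)"
      show ?thesis by (rule that[of "-1"]) (use h len in auto)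
    next
      assume h: "\<forall>r. Suc r < length P \<longrightarrow> (ed r \<in> H \<longleftrightarrow> odd r)"
      show ?thesis by (rule that[of "1"]) (use h len in auto)
    qed
  qed
  define s where "s = (\<lambda>r::nat. if even r then \<sigma> else - \<sigma>)"
  have salt: "\<forall>r. s (Suc r) = - s r" by (simp add: s_def)
  have hs: "s r = (if ed r \<in> H then -1 else 1)" if "r < Suc m" for r
    using sig that unfolding s_def by blast
  have sabs: "\<bar>s r\<bar> = 1" if "r < Suc m" for r using hs[OF that] by simp
  define d where "d = (\<lambda>e. \<Sum>r<Suc m. if ed r = e then s r else 0)"
  define cnt where "cnt = (\<lambda>e. card {r\<in>{..<Suc m}. ed r = e})"
  have cnt_sum: "(\<Sum>r<Suc m. if ed r = e then (1::real) else 0) = real (cnt e)" for e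
  proof -
    have "(\<Sum>r<Suc m. if ed r = e then (1::real) else 0) = (\<Sum>r\<in>{r\<in>{..<Suc m}. ed r = e}. 1)"
      by (rule sum.inter_filter[symmetric]) simp
    then show ?thesis by (simp add: cnt_def)
  qed
  have dH: "d e = - real (cnt e)" if "e \<in> H" for e
  proof -
    have "d e = (\<Sum>r<Suc m. - (if ed r = e then (1::real) else 0))"
      unfolding d_def by (rule sum.cong) (use hs that in auto)
    then have "d e = - (\<Sum>r<Suc m. if ed r = e then (1::real) else 0)" by (simp only: sum_negf)
    then show ?thesis by (simp only: cnt_sum)
  qed
  have dN: "d e = real (cnt e)" if "e \<notin> H" for e
  proof -
    have "d e = (\<Sum>r<Suc m. (if ed r = e then (1::real) else 0))"
      unfolding d_def by (rule sum.cong) (use hs that in auto)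
    then show ?thesis by (simp only: cnt_sum)
  qed
  have cnt_le: "cnt e \<le> Suc m" for e
  proof -
    have "cnt e \<le> card {..<Suc m}" unfolding cnt_def by (rule card_mono) auto
    then show ?thesis by simp
  qed
  have cnt0: "1 \<le> cnt (ed 0)"
  proof -
    have "{r\<in>{..<Suc m}. ed r = ed 0} \<noteq> {}" by auto
    then show ?thesis unfolding cnt_def by (simp add: Suc_le_eq card_gt_0_iff)
  qed
  define \<epsilon> where "\<epsilon> = 1 / real (Suc (Suc m))"
  have ep: "0 < \<epsilon>" "2 * \<epsilon> \<le> 1" by (auto simp: \<epsilon>_def field_simps)
  have ecnt: "0 \<le> \<epsilon> * real (cnt e)" "\<epsilon> * real (cnt e) < 1" for e
  proof -
    show "0 \<le> \<epsilon> * real (cnt e)" using ep by simp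
    have "real (cnt e) < real (Suc (Suc m))" using cnt_le[of e] by simp
    then show "\<epsilon> * real (cnt e) < 1" by (simp add: \<epsilon>_def field_simps)
  qed
  have ecnt0: "0 < \<epsilon> * real (cnt (ed 0))" using ep cnt0 by simp
  define x where "x = (\<lambda>e. indH e + \<epsilon> * d e)"
  have xrange: "0 \<le> x e \<and> x e \<le> 1" for e
    using ecnt[of e] by (cases "e \<in> H") (auto simp: x_def indH_def dH dN)
  have xfrac: "x (ed 0) \<noteq> 0 \<and> x (ed 0) \<noteq> 1"
    using ecnt[of "ed 0"] ecnt0 cnt0 by (cases "ed 0 \<in> H") (auto simp: x_def indH_def dH dN)
  define Ev where "Ev = (\<lambda>v. {e\<in>E. v\<in>e})"
  have fEv: "finite (Ev v)" for v using fE by (simp add: Ev_def)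
  define g where "g = (\<lambda>v r. if P ! r = v then (1::real) else 0)"
  have Delta: "(\<Sum>e\<in>Ev v. d e) = g v 0 * s 0 + g v (Suc m) * s m" for v
  proof -
    have "(\<Sum>e\<in>Ev v. d e) = (\<Sum>r<Suc m. \<Sum>e\<in>Ev v. (if ed r = e then s r else 0))"
      unfolding d_def by (rule sum.swap)
    also have "\<dots> = (\<Sum>r<Suc m. (g v r + g v (Suc r)) * s r)"
    proof (rule sum.cong)
      fix r assume r: "r \<in> {..<Suc m}"
      have "(\<Sum>e\<in>Ev v. (if ed r = e then s r else 0)) = (if ed r \<in> Ev v then s r else 0)"
        using fEv by simp
      also have "\<dots> = (g v r + g v (Suc r)) * s r"
        using edE[of r] neq[of r] r unfolding Ev_def g_def ed_def by auto
      finally show "(\<Sum>e\<in>Ev v. (if ed r = e then s r else 0)) = (g v r + g v (Suc r)) * s r" .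
    qed simp
    also have "\<dots> = g v 0 * s 0 + g v (Suc m) * s m" by (rule telesc[OF salt])
    finally show ?thesis .
  qed
  have hd0: "hd P = P ! 0" using len by (cases P) auto
  have last0: "last P = P ! Suc m" using len last_conv_nth[of P] by (cases "P = []") auto
  have loadx: "load E x v = real (deg H v) + \<epsilon> * (g v 0 * s 0 + g v (Suc m) * s m)" for v
  proof -
    have "load E x v = load E indH v + \<epsilon> * (\<Sum>e\<in>Ev v. d e)"
      unfolding load_def x_def Ev_def by (simp add: sum.distrib sum_distrib_left)
    then show ?thesis using Delta loadH by simp
  qed
  have xfeas: "primal_feasible n E b x"
    unfolding feas_iff[OF sg]
  proof (intro conjI ballI)
    fix e assume "e \<in> E" then show "0 \<le> x e" "x e \<le> 1" using xrange by auto
  next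
    fix v assume v: "v \<in> vset n"
    show "load E x v \<le> real (b v)"
    proof (cases "v = P ! 0 \<or> v = P ! Suc m")
      case True
      then have "v \<in> unsat n b H" using assms(9,10) hd0 last0 by auto
      then have "deg H v + 1 \<le> b v" by (simp add: unsat_def)
      moreover have "g v 0 * s 0 + g v (Suc m) * s m \<le> 2"
        using sabs[of 0] sabs[of m] unfolding g_def by (auto simp: abs_le_iff)
      then have "\<epsilon> * (g v 0 * s 0 + g v (Suc m) * s m) \<le> 1"
      proof -
        have "\<epsilon> * (g v 0 * s 0 + g v (Suc m) * s m) \<le> \<epsilon> * 2"
          by (rule mult_left_mono) (use \<open>g v 0 * s 0 + g v (Suc m) * s m \<le> 2\<close> ep in auto)
        then show ?thesis using ep by linarith
      qed
      ultimately show ?thesis unfolding loadx by linarith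
    next
      case False
      then have "g v 0 = 0" "g v (Suc m) = 0" by (auto simp: g_def)
      then show ?thesis unfolding loadx using assms(4) v
        by (auto simp: is_min_bmatching_def is_bmatching_def)
    qed
  qed
  have wd: "(\<Sum>e\<in>E. w e * d e) = 0"
  proof -
    have "(\<Sum>e\<in>E. w e * d e) = (\<Sum>e\<in>E. \<Sum>r<Suc m. w e * (if ed r = e then s r else 0))"
      unfolding d_def by (simp only: sum_distrib_left)
    also have "\<dots> = (\<Sum>r<Suc m. \<Sum>e\<in>E. w e * (if ed r = e then s r else 0))"
      by (rule sum.swap)
    also have "\<dots> = (\<Sum>r<Suc m. - ((y (P ! r) + y (P ! Suc r)) * s r))"
    proof (rule sum.cong)
      fix r assume r: "r \<in> {..<Suc m}"
      have "(\<Sum>e\<in>E. w e * (if ed r = e then s r else 0)) = (\<Sum>e\<in>E. if ed r = e then w e * s r else 0)"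
        by (rule sum.cong) auto
      also have "\<dots> = w (ed r) * s r" using fE edE r by simp
      also have "w (ed r) = - (y (P ! r) + y (P ! Suc r))" using tight[of r] r by simp
      finally show "(\<Sum>e\<in>E. w e * (if ed r = e then s r else 0)) = - ((y (P ! r) + y (P ! Suc r)) * s r)"
        by (simp add: algebra_simps)
    qed simp
    also have "\<dots> = - (\<Sum>r<Suc m. (y (P ! r) + y (P ! Suc r)) * s r)"
      by (simp only: sum_negf)
    also have "(\<Sum>r<Suc m. (y (P ! r) + y (P ! Suc r)) * s r) = y (P ! 0) * s 0 + y (P ! Suc m) * s m"
      by (rule telesc[OF salt])
    also have "y (P ! 0) = 0" using y0[of "P ! 0"] assms(9) hd0 by simp
    also have "y (P ! Suc m) = 0" using y0[of "P ! Suc m"] assms(10) last0 by simp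
    finally show ?thesis by simp
  qed
  have objx: "primal_obj E w x = D"
  proof -
    have "primal_obj E w x = (\<Sum>e\<in>E. w e * indH e + \<epsilon> * (w e * d e))"
      unfolding primal_obj_def x_def by (rule sum.cong) (simp_all add: distrib_left)
    also have "\<dots> = primal_obj E w indH + \<epsilon> * (\<Sum>e\<in>E. w e * d e)"
      unfolding primal_obj_def by (simp only: sum.distrib sum_distrib_left)
    finally show ?thesis using wd objHD by simp
  qed
  have "primal_optimal n E b w x"
    unfolding primal_optimal_def using xfeas objx weak by simp
  then have "x (ed 0) = 0 \<or> x (ed 0) = 1"
    using assms(6) edE[of 0] unfolding no_fractional_solution_def by blast
  then show False using xfrac by blast
qed

end
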